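(* Let $n\in\mathbb{N}$, $m\in\mathbb{N}_0$, and suppose $L_n^{(m)}$ has a rational root $\bar x$. Then $\bar x\in\mathbb{N}$. Moreover, if $\bar x\in\mathbb{N}$ has prime factorization $\bar x=p_1^{n_1}\cdots p_k^{n_k}$, then $L_n^{(m)}(\bar x)=0$ is possible only if $n=p_1^{l_1}\cdots p_k^{l_k}$ for some $l_1,\dots,l_k\in\mathbb{N}_0$.
   Context: Generalized Laguerre polynomials: $L_n^{(\alpha)}(x)=\sum_{j=0}^n(-1)^j\binom{n+\alpha}{n-j}\frac{x^j}{j!}$. *)

theory Defs
  imports "HOL-Computational_Algebra.Computational_Algebra"
begin

definition laguerre :: "nat \<Rightarrow> nat \<Rightarrow> rat poly" where
  "laguerre n \<alpha> = (\<Sum>j\<le>n. monom ((-1)^j * of_nat ((n + \<alpha>) choose (n - j)) / fact j) j)"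

end

theory Submission
  imports Defs
begin

lemma poly_laguerre:
  "poly (laguerre n m) x = (\<Sum>j\<le>n. (-1)^j * of_nat ((n + m) choose (n - j)) / fact j * x^j)"
  unfolding laguerre_def by (simp add: poly_sum poly_monom)

lemma fact_div_dvd:
  assumes "j < n"
  shows "int n dvd (fact n div fact j :: int)"
proof -
  obtain n' where n: "n = Suc n'" using assms by (cases n) auto
  have "fact j dvd (fact n' :: int)" using assms n by (intro fact_dvd) auto
  then have "(fact n div fact j :: int) = int n * (fact n' div fact j)"
    using n by (simp add: div_mult_swap)
  then show ?thesis by simp
qed

lemma int_identity:
  fixes a b :: int
  assumes b: "b > 0" and x: "x = of_int a / of_int b"
  shows "of_int (\<Sum>j\<le>n. (-1)^j * int ((n + m) choose (n - j)) * (fact n div fact j) * a^j * b^(n-j)) = (fact n * of_int b ^ n) * poly (laguerre n m) x"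
proof -
  have t: "(of_int ((-1)^j * int ((n + m) choose (n - j)) * (fact n div fact j) * a^j * b^(n-j)) :: rat)
      = (fact n * of_int b ^ n) * ((-1)^j * of_nat ((n + m) choose (n - j)) / fact j * x^j)"
    if "j \<le> n" for j
  proof -
    have d: "fact j dvd (fact n :: int)" using that by (rule fact_dvd)
    have "(of_int (fact n div fact j :: int) :: rat) = fact n / fact j"
      using d by (simp add: of_int_div del: of_int_fact) (simp)
    moreover have "(of_int b ^ n :: rat) = of_int b ^ j * of_int b ^ (n - j)"
      using that by (simp add: power_add[symmetric])
    moreover have "of_int b \<noteq> (0::rat)" using b by simp
    ultimately show ?thesis unfolding x
      by (simp add: power_divide field_simps)
  qed
  have "of_int (\<Sum>j\<le>n. (-1)^j * int ((n + m) choose (n - j)) * (fact n div fact j) * a^j * b^(n-j))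
     = (\<Sum>j\<le>n. (of_int ((-1)^j * int ((n + m) choose (n - j)) * (fact n div fact j) * a^j * b^(n-j)) :: rat))"
    by (rule of_int_sum)
  also have "\<dots> = (\<Sum>j\<le>n. (fact n * of_int b ^ n) * ((-1)^j * of_nat ((n + m) choose (n - j)) / fact j * x^j))"
    by (intro sum.cong refl t) simp
  also have "\<dots> = (fact n * of_int b ^ n) * poly (laguerre n m) x"
    unfolding poly_laguerre sum_distrib_left ..
  finally show ?thesis .
qed

theorem proposition5:
  fixes n m :: nat and x :: rat
  assumes "n \<ge> 1"
    and "poly (laguerre n m) x = 0"
  shows "\<exists>k::nat. k > 0 \<and> x = of_nat k \<and>
           (\<exists>l :: nat \<Rightarrow> nat. n = (\<Prod>p\<in>prime_factors k. p ^ l p))"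
proof -
  obtain a b where q: "quotient_of x = (a, b)" by (cases "quotient_of x") auto
  have b: "b > 0" using quotient_of_denom_pos[OF q] .
  have cop: "coprime a b" using quotient_of_coprime[OF q] .
  have xab: "x = of_int a / of_int b" using quotient_of_div[OF q] .
  define f where "f j = (-1)^j * int ((n + m) choose (n - j)) * (fact n div fact j) * a^j * b^(n-j)" for j
  have "of_int (\<Sum>j\<le>n. f j) = (0::rat)"
    unfolding f_def int_identity[OF b xab] assms(2) by simp
  then have T0: "(\<Sum>j\<le>n. f j) = 0" by (simp only: of_int_eq_0_iff)
  have split: "(\<Sum>j\<le>n. f j) = (\<Sum>j<n. f j) + f n"
    by (simp add: lessThan_Suc_atMost[symmetric])
  have fn: "f n = (-1)^n * a^n" by (simp add: f_def)
  have key: "d dvd a ^ n" if "\<And>j. j < n \<Longrightarrow> d dvd f j" for d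
  proof -
    have "d dvd (\<Sum>j<n. f j)" by (rule dvd_sum) (use that in auto)
    moreover have "(\<Sum>j<n. f j) = - ((-1)^n * a^n)" using T0 split fn by simp
    ultimately have "d dvd (-1)^n * a^n" by (metis dvd_minus_iff)
    then have "d dvd (-1)^n * ((-1)^n * a^n)" by (rule dvd_mult)
    then show ?thesis by (simp flip: mult.assoc power_mult_distrib)
  qed
  have "b dvd a ^ n"
  proof (rule key)
    fix j assume "j < n"
    then have "b dvd b^(n-j)" by (intro dvd_power) auto
    then show "b dvd f j" unfolding f_def by simp
  qed
  moreover have "coprime (a ^ n) b" using cop assms(1) by simp
  ultimately have "is_unit b" by (meson coprime_common_divisor dvd_refl)
  then have b1: "b = 1" using b by simp
  have xa: "x = of_int a" using xab b1 by simp
  have apos: "a > 0"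
  proof (rule ccontr)
    assume "\<not> a > 0"
    then have nx: "-x \<ge> 0" using xa by simp
    have "0 < (\<Sum>j\<le>n. of_nat ((n + m) choose (n - j)) / fact j * (-x)^j)"
    proof (rule sum_pos2[where i=0])
      show "0 < of_nat ((n + m) choose (n - 0)) / fact 0 * (- x) ^ 0" by simp
    qed (use nx in auto)
    also have "\<dots> = poly (laguerre n m) x"
      unfolding poly_laguerre
    proof (rule sum.cong[OF refl])
      fix j
      have "(-x)^j = (-1)^j * x^j" by (rule power_minus)
      show "of_nat ((n + m) choose (n - j)) / fact j * (-x)^j
          = (-1)^j * of_nat ((n + m) choose (n - j)) / fact j * x^j"
        unfolding \<open>(-x)^j = (-1)^j * x^j\<close> by (simp only: times_divide_eq_left times_divide_eq_right mult_ac)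
    qed
    finally show False using assms(2) by simp
  qed
  define k where "k = nat a"
  have k3: "int k = a" using apos unfolding k_def by simp
  have k1: "k > 0" using apos k3 by linarith
  have k2: "x = of_nat k" using xa k3 by (metis of_int_of_nat_eq)
  note k = k1 k2 k3
  have pf: "prime_factors n \<subseteq> prime_factors k"
  proof
    fix p assume p: "p \<in> prime_factors n"
    then have pp: "prime p" "p dvd n" using assms(1) by auto
    have "int p dvd a ^ n"
    proof (rule key)
      fix j assume "j < n"
      then have "int p dvd (fact n div fact j :: int)"
        using dvd_trans[OF _ fact_div_dvd[OF \<open>j < n\<close>], of "int p"] pp(2) by simp
      then show "int p dvd f j" unfolding f_def by simp
    qed
    then have "int p dvd a" using pp(1) prime_dvd_power[of "int p" a n] by simp
    then have "p dvd k" using k(3) by (metis int_dvd_int_iff)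
    then show "p \<in> prime_factors k" using pp(1) k(1) by (simp add: in_prime_factors_iff)
  qed
  have "n = (\<Prod>p\<in>prime_factors n. p ^ multiplicity p n)"
    using assms(1) by (intro prime_factorization_nat) auto
  also have "\<dots> = (\<Prod>p\<in>prime_factors k. p ^ multiplicity p n)"
  proof (rule prod.mono_neutral_left[OF _ pf])
    show "\<forall>i\<in>prime_factors k - prime_factors n. i ^ multiplicity i n = 1"
    proof
      fix i assume "i \<in> prime_factors k - prime_factors n"
      then have "\<not> i dvd n" using assms(1) by (auto simp: in_prime_factors_iff)
      then show "i ^ multiplicity i n = 1" by (simp add: not_dvd_imp_multiplicity_0)
    qed
  qed simp
  finally have "\<exists>l :: nat \<Rightarrow> nat. n = (\<Prod>p\<in>prime_factors k. p ^ l p)"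
    by (intro exI[of _ "\<lambda>p. multiplicity p n"])
  then show ?thesis using k1 k2 by (intro exI[of _ k]) simp
qed

end
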